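(* Let $n$ be a positive integer, $q=2^n$, $k$ an integer with $1\le k\le n-1$, and $d=\gcd(n,k)$. For $\alpha,\beta,\gamma\in\mathbb{F}_q$ define $$S(\alpha,\beta,\gamma)=\sum_{x\in\mathbb{F}_q}(-1)^{\mathrm{Tr}_1^n\left(\alpha x^{2^{2k}+1}+\beta x^{2^k+1}+\gamma x\right)}.$$ Then $$\sum_{\alpha,\beta,\gamma\in\mathbb{F}_q}S(\alpha,\beta,\gamma)^3=(2^{n+d}+2^n-2^d)\cdot 2^{3n}.$$ Equivalently, the number of triples $(x,y,z)\in\mathbb{F}_q^3$ with $x+y+z=0$, $x^{2^k+1}+y^{2^k+1}+z^{2^k+1}=0$ and $x^{2^{2k}+1}+y^{2^{2k}+1}+z^{2^{2k}+1}=0$ equals $2^{n+d}+2^n-2^d$.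
   Context: $\mathrm{Tr}_1^n:\mathbb{F}_{2^n}\to\mathbb{F}_2$ is the absolute trace $x\mapsto\sum_{i=0}^{n-1}x^{2^i}$. *)

theory Defs
  imports Main "HOL-Library.Cardinality"
begin

text \<open>Absolute trace of F_{2^n} to F_2 (values 0 or 1 in the field itself).\<close>
definition abs_trace :: "nat \<Rightarrow> 'a::field \<Rightarrow> 'a" where
  "abs_trace n x = (\<Sum>i<n. x ^ (2 ^ i))"

definition add_char :: "nat \<Rightarrow> 'a::field \<Rightarrow> int" where
  "add_char n x = (if abs_trace n x = 0 then 1 else -1)"

definition S_sum :: "nat \<Rightarrow> nat \<Rightarrow> 'a::{field,finite} \<Rightarrow> 'a \<Rightarrow> 'a \<Rightarrow> int" where
  "S_sum n k \<alpha> \<beta> \<gamma> =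
     (\<Sum>x\<in>(UNIV::'a set). add_char n (\<alpha> * x ^ (2 ^ (2 * k) + 1) + \<beta> * x ^ (2 ^ k + 1) + \<gamma> * x))"

end

theory Submission imports Defs "HOL-Computational_Algebra.Polynomial"
begin

lemma L3: "(\<Sum>a\<in>(UNIV::'a::finite set). \<Sum>b\<in>(UNIV::'b::finite set). \<Sum>c\<in>(UNIV::'c::finite set). G a b c)
   = (\<Sum>p\<in>UNIV. G (fst p) (fst (snd p)) (snd (snd p)))"
proof -
  have "(\<Sum>p\<in>UNIV. G (fst p) (fst (snd p)) (snd (snd p))) = (\<Sum>p\<in>UNIV \<times> UNIV. G (fst p) (fst (snd p)) (snd (snd p)))"
    by simp
  also have "\<dots> = (\<Sum>a\<in>UNIV. \<Sum>q\<in>UNIV. G a (fst q) (snd q))"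
    by (simp add: sum.cartesian_product split_def)
  also have "\<dots> = (\<Sum>a\<in>UNIV. \<Sum>q\<in>UNIV \<times> UNIV. G a (fst q) (snd q))" by simp
  also have "\<dots> = (\<Sum>a\<in>UNIV. \<Sum>b\<in>UNIV. \<Sum>c\<in>UNIV. G a b c)"
    by (simp add: sum.cartesian_product split_def)
  finally show ?thesis ..
qed

lemma triple_prod: "(\<Sum>a\<in>A. f a) * ((\<Sum>b\<in>B. g b) * (\<Sum>c\<in>C. h c)) = (\<Sum>a\<in>A. \<Sum>b\<in>B. \<Sum>c\<in>C. f a * (g b * (h c :: int)))"
  by (subst sum_product, subst sum_product, simp add: sum_distrib_left)

definition Tf :: "nat \<Rightarrow> 'a \<times> 'a \<times> 'a \<Rightarrow> 'a::field" where
  "Tf m q = fst q ^ m + fst (snd q) ^ m + snd (snd q) ^ m"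

context
  fixes n :: nat
  assumes card2: "CARD('a::{field,finite}) = 2 ^ n" and n1: "1 \<le> n"
begin

lemma two_zero: "(2::'a) = 0"
proof -
  have "(\<Sum>x\<in>UNIV. x + (1::'a)) = (\<Sum>x\<in>UNIV. x)"
    by (rule sum.reindex_bij_witness[of _ "\<lambda>x. x - 1" "\<lambda>x. x + 1"]) auto
  hence "of_nat CARD('a) = (0::'a)" by (simp add: sum.distrib)
  hence "(2::'a) ^ n = 0" using card2 by simp
  thus ?thesis by simp
qed

lemma neg_eq: "- (x::'a) = x"
proof -
  have "x + x = 2 * x" by simp
  hence "x + x = 0" using two_zero by simp
  thus ?thesis by (simp add: add_eq_0_iff)
qed

lemma add_eq0_iff: "(x::'a) + y = 0 \<longleftrightarrow> x = y"
  by (metis add_eq_0_iff neg_eq)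

lemma fermat1: assumes "(x::'a) \<noteq> 0" shows "x ^ (CARD('a) - 1) = 1"
proof -
  let ?G = "UNIV - {0::'a}"
  have "(\<Prod>y\<in>?G. x * y) = (\<Prod>y\<in>?G. y)"
    by (rule prod.reindex_bij_witness[of _ "\<lambda>y. y / x" "\<lambda>y. x * y"]) (use assms in auto)
  hence "x ^ card ?G * (\<Prod>y\<in>?G. y) = (\<Prod>y\<in>?G. y)" by (simp add: prod.distrib)
  moreover have "(\<Prod>y\<in>?G. y) \<noteq> 0" by simp
  ultimately have "x ^ card ?G = 1" by simp
  moreover have "card ?G = CARD('a) - 1" by (simp add: card_Diff_singleton)
  ultimately show ?thesis by simp
qed

lemma fermat: "(x::'a) ^ (2 ^ n) = x"
proof (cases "x = 0")
  case True thus ?thesis using n1 by simp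
next
  case False
  have "2 ^ n = Suc (CARD('a) - 1)" using card2 by simp
  hence "x ^ (2 ^ n) = x ^ Suc (CARD('a) - 1)" by (simp only:)
  also have "\<dots> = x" by (simp only: power_Suc fermat1[OF False] mult_1_right)
  finally show ?thesis .
qed

lemma frob: "((x::'a) + y) ^ (2 ^ i) = x ^ (2 ^ i) + y ^ (2 ^ i)"
proof (induction i)
  case 0 thus ?case by simp
next
  case (Suc i)
  have sq: "(a + b) ^ 2 = a ^ 2 + b ^ 2" for a b :: 'a
  proof -
    have "(a + b) ^ 2 = a^2 + b^2 + 2 * a * b" by (simp add: power2_eq_square algebra_simps)
    thus ?thesis using two_zero by simp
  qed
  have "(x + y) ^ (2 ^ Suc i) = ((x + y) ^ (2 ^ i)) ^ 2" by (simp add: power_mult[symmetric] mult.commute)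
  also have "\<dots> = (x ^ (2 ^ i)) ^ 2 + (y ^ (2 ^ i)) ^ 2" using Suc sq by simp
  also have "\<dots> = x ^ (2 ^ Suc i) + y ^ (2 ^ Suc i)" by (simp add: power_mult[symmetric] mult.commute)
  finally show ?case .
qed

lemma sum_sq: "(\<Sum>i\<in>A. f i :: 'a) ^ 2 = (\<Sum>i\<in>A. (f i) ^ 2)"
proof (induction A rule: infinite_finite_induct)
  case (insert a A)
  thus ?case using frob[of "f a" "sum f A" 1] by simp
qed simp_all

lemma trace_add: "abs_trace n ((x::'a) + y) = abs_trace n x + abs_trace n y"
  unfolding abs_trace_def by (simp add: frob sum.distrib)

lemma trace_sq: "abs_trace n (x::'a) ^ 2 = abs_trace n x"
proof -
  let ?g = "\<lambda>i. x ^ (2 ^ i)"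
  have "abs_trace n x ^ 2 = (\<Sum>i<n. ?g (Suc i))"
    unfolding abs_trace_def sum_sq by (simp add: power_mult[symmetric] mult.commute)
  also have "\<dots> = (\<Sum>i<Suc n. ?g i) - ?g 0"
    by (subst sum.lessThan_Suc_shift) simp
  also have "\<dots> = (\<Sum>i<n. ?g i) + ?g n - ?g 0" by simp
  also have "\<dots> = (\<Sum>i<n. ?g i)" using fermat by simp
  finally show ?thesis unfolding abs_trace_def .
qed

lemma trace01: "abs_trace n (x::'a) = 0 \<or> abs_trace n x = 1"
proof -
  let ?t = "abs_trace n x"
  have "?t * (?t - 1) = 0" using trace_sq[of x] by (simp add: power2_eq_square algebra_simps)
  thus ?thesis by simp
qed

lemma char_mult: "add_char n ((x::'a) + y) = add_char n x * add_char n y"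
proof -
  have "(1::'a) + 1 = 0" using two_zero by simp
  thus ?thesis unfolding add_char_def trace_add using trace01[of x] trace01[of y] by auto
qed

lemma trace_nontriv: "\<exists>x::'a. abs_trace n x \<noteq> 0"
proof -
  define P :: "'a poly" where "P = (\<Sum>i<n. monom 1 (2 ^ i))"
  have ev: "poly P x = abs_trace n x" for x
    unfolding P_def abs_trace_def by (simp add: poly_sum poly_monom)
  have "coeff P (2 ^ (n - 1)) = (\<Sum>i<n. if i = n - 1 then 1 else 0)"
    unfolding P_def coeff_sum coeff_monom by (intro sum.cong) auto
  also have "\<dots> = 1" using n1 by simp
  finally have "P \<noteq> 0" by auto
  hence "card {x. poly P x = 0} \<le> degree P" by (rule card_poly_roots_bound)
  moreover have "degree P \<le> 2 ^ (n - 1)"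
    unfolding P_def
    by (intro degree_sum_le) (auto intro!: order.trans[OF degree_monom_le] power_increasing)
  moreover have "2 ^ (n - 1) < (2::nat) ^ n" using n1 by simp
  ultimately have "card {x. poly P x = 0} < CARD('a)" using card2 by linarith
  hence "{x. poly P x = 0} \<noteq> UNIV" by auto
  thus ?thesis using ev by auto
qed

lemma char_sum0: "(\<Sum>x\<in>UNIV. add_char n (x::'a)) = 0"
proof -
  obtain a :: 'a where a: "abs_trace n a \<noteq> 0" using trace_nontriv by blast
  hence ca: "add_char n a = -1" by (simp add: add_char_def)
  have "(\<Sum>x\<in>UNIV. add_char n (x + a)) = (\<Sum>x\<in>UNIV. add_char n (x::'a))"
    by (rule sum.reindex_bij_witness[where i="\<lambda>x. x - a" and j="\<lambda>x. x + a"]) auto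
  hence "(\<Sum>x\<in>UNIV. add_char n (x::'a)) * (-1) = (\<Sum>x\<in>UNIV. add_char n (x::'a))"
    by (simp add: char_mult ca sum_negf)
  thus ?thesis by simp
qed

lemma orth: "(\<Sum>\<alpha>\<in>UNIV. add_char n (\<alpha> * (t::'a))) = (if t = 0 then int CARD('a) else 0)"
proof (cases "t = 0")
  case True thus ?thesis by (simp add: add_char_def abs_trace_def n1 zero_power)
next
  case False
  have "(\<Sum>\<alpha>\<in>UNIV. add_char n (\<alpha> * t)) = (\<Sum>x\<in>UNIV. add_char n (x::'a))"
    by (rule sum.reindex_bij_witness[where i="\<lambda>x. x / t" and j="\<lambda>x. x * t"]) (use False in auto)
  thus ?thesis using char_sum0 False by simp
qed

lemma fix_mult: "(u::'a) ^ (2 ^ a) = u \<Longrightarrow> u ^ (2 ^ (a * c)) = u"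
proof (induction c)
  case (Suc c)
  have "u ^ (2 ^ (a * Suc c)) = (u ^ (2 ^ (a * c))) ^ (2 ^ a)"
    by (simp add: power_add power_mult[symmetric] mult.commute)
  thus ?case using Suc by simp
qed simp

lemma fix_cancel: "(u::'a) ^ (2 ^ (a + b)) = u \<Longrightarrow> u ^ (2 ^ a) = u \<Longrightarrow> u ^ (2 ^ b) = u"
proof -
  assume h1: "u ^ (2 ^ (a + b)) = u" and h2: "u ^ (2 ^ a) = u"
  have "u ^ (2 ^ (a + b)) = (u ^ (2 ^ a)) ^ (2 ^ b)" by (simp add: power_add power_mult)
  thus ?thesis using h1 h2 by simp
qed

lemma fix_k_iff:
  assumes "1 \<le> k"
  shows "(u::'a) ^ (2 ^ k) = u \<longleftrightarrow> u ^ (2 ^ gcd n k) = u"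
proof
  assume h: "u ^ (2 ^ k) = u"
  obtain x y where xy: "k * x = n * y + gcd k n" using bezout_nat[of k n] assms by auto
  have "u ^ (2 ^ (k * x)) = u" using fix_mult[OF h] .
  hence "u ^ (2 ^ (n * y + gcd n k)) = u" using xy by (simp add: gcd.commute)
  moreover have "u ^ (2 ^ (n * y)) = u" using fix_mult[OF fermat] .
  ultimately show "u ^ (2 ^ gcd n k) = u" by (rule fix_cancel)
next
  assume h: "u ^ (2 ^ gcd n k) = u"
  obtain c where "k = gcd n k * c" by (meson gcd_dvd2 dvdE)
  thus "u ^ (2 ^ k) = u" using fix_mult[OF h, of c] by simp
qed

lemma nat_geom: "(m::nat) \<ge> 1 \<Longrightarrow> m ^ c - 1 = (m - 1) * (\<Sum>i<c. m ^ i)"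
proof -
  assume m: "m \<ge> 1"
  have "int (m ^ c - 1) = int m ^ c - 1" using m by (simp add: of_nat_diff)
  also have "\<dots> = (int m - 1) * (\<Sum>i<c. int m ^ i)" by (rule power_diff_1_eq)
  also have "\<dots> = int ((m - 1) * (\<Sum>i<c. m ^ i))" using m by (simp add: of_nat_diff)
  finally show ?thesis by linarith
qed

lemma card_fix:
  assumes "d dvd n" "1 \<le> d"
  shows "card {u::'a. u ^ (2 ^ d) = u} = 2 ^ d"
proof -
  define e :: nat where "e = 2 ^ d - 1"
  obtain c where c: "n = d * c" using assms(1) by blast
  define t :: nat where "t = (\<Sum>i<c. ((2::nat) ^ d) ^ i)"
  have "(2::nat) ^ 1 \<le> 2 ^ d" by (rule power_increasing) (use assms in auto)
  hence e1: "e \<ge> 1" unfolding e_def by simp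
  have et: "e * t = 2 ^ n - 1" unfolding e_def t_def c
    using nat_geom[of "2^d" c] by (simp add: power_mult)
  have t1: "t \<ge> 1"
  proof (rule ccontr)
    assume "\<not> t \<ge> 1" hence "t = 0" by simp
    hence "2 ^ n - 1 = (0::nat)" using et by simp
    moreover have "(2::nat) ^ 1 \<le> 2 ^ n" by (rule power_increasing) (use n1 in auto)
    ultimately show False by simp
  qed
  define K where "K = {x::'a. x ^ e = 1}"
  define B :: "'a poly" where "B = (\<Sum>j<t. monom 1 (e * j))"
  define Z where "Z = {x::'a. poly B x = 0}"
  have Bev: "poly B x = (\<Sum>j<t. (x ^ e) ^ j)" for x
    unfolding B_def by (simp add: poly_sum poly_monom power_mult)
  have "coeff B 0 = (\<Sum>j<t. if j = 0 then 1 else 0)"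
    unfolding B_def coeff_sum coeff_monom by (intro sum.cong) (use e1 in auto)
  also have "\<dots> = 1" using t1 by simp
  finally have "B \<noteq> 0" by auto
  hence "card Z \<le> degree B" unfolding Z_def by (rule card_poly_roots_bound)
  also have "degree B \<le> e * (t - 1)"
    unfolding B_def by (intro degree_sum_le) (auto intro!: order.trans[OF degree_monom_le])
  finally have cZ: "card Z \<le> e * (t - 1)" .
  define A :: "'a poly" where "A = monom 1 e - 1"
  have Aev: "poly A x = x ^ e - 1" for x unfolding A_def by (simp add: poly_monom)
  have "coeff A e = 1" unfolding A_def using e1 by simp
  hence "A \<noteq> 0" by auto
  hence "card {x. poly A x = 0} \<le> degree A" by (rule card_poly_roots_bound)
  also have "degree A \<le> e" unfolding A_def
    by (intro degree_diff_le degree_monom_le) simp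
  finally have cK1: "card K \<le> e" unfolding K_def using Aev by simp
  have sub: "UNIV - {0} \<subseteq> K \<union> Z"
  proof
    fix x :: 'a assume "x \<in> UNIV - {0}"
    hence "x ^ (CARD('a) - 1) = 1" using fermat1 by simp
    hence "x ^ (e * t) = 1" using card2 et by simp
    hence "(x ^ e) ^ t = 1" by (simp add: power_mult)
    hence "(x ^ e - 1) * (\<Sum>j<t. (x ^ e) ^ j) = 0" using power_diff_1_eq[of "x ^ e" t] by simp
    thus "x \<in> K \<union> Z" unfolding K_def Z_def Bev by auto
  qed
  have "card (UNIV - {0::'a}) \<le> card (K \<union> Z)" by (rule card_mono[OF _ sub]) simp
  also have "\<dots> \<le> card K + card Z" by (rule card_Un_le)
  finally have "2 ^ n - 1 \<le> card K + e * (t - 1)" using cZ card2 by (simp add: card_Diff_singleton)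
  hence "e * t \<le> card K + e * (t - 1)" using et by simp
  moreover have "e * t = e * (t - 1) + e" using t1
    by (cases t) simp_all
  ultimately have cK: "card K = e" using cK1 by linarith
  have eq: "{u::'a. u ^ (2 ^ d) = u} = insert 0 K"
  proof -
    have "u ^ (2 ^ d) = u \<longleftrightarrow> u = 0 \<or> u ^ e = 1" for u :: 'a
    proof -
      have "(2::nat) ^ d = Suc e" unfolding e_def by simp
      hence "u ^ (2 ^ d) = u * u ^ e" by simp
      thus ?thesis by auto
    qed
    thus ?thesis unfolding K_def by auto
  qed
  have "0 \<notin> K" unfolding K_def using e1 by (simp add: zero_power)
  hence "card (insert 0 K) = Suc e" using cK by simp
  also have "Suc e = 2 ^ d" unfolding e_def by simp
  finally show ?thesis using eq by simp
qed

lemma cube_cond: "(x::'a) ^ (2 ^ j + 1) + y ^ (2 ^ j + 1) + (x + y) ^ (2 ^ j + 1) = x ^ (2 ^ j) * y + x * y ^ (2 ^ j)"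
proof -
  have "(x + y) ^ (2 ^ j + 1) = (x ^ (2 ^ j) + y ^ (2 ^ j)) * (x + y)" by (simp add: frob)
  hence "x ^ (2 ^ j + 1) + y ^ (2 ^ j + 1) + (x + y) ^ (2 ^ j + 1)
     = 2 * x ^ (2 ^ j + 1) + 2 * y ^ (2 ^ j + 1) + (x ^ (2 ^ j) * y + x * y ^ (2 ^ j))"
    by (simp add: algebra_simps)
  thus ?thesis using two_zero by simp
qed

lemma per_point:
  "(\<Sum>\<alpha>\<in>UNIV. \<Sum>\<beta>\<in>UNIV. \<Sum>\<gamma>\<in>UNIV. add_char n (\<alpha> * (A::'a)) * add_char n (\<beta> * (B::'a)) * add_char n (\<gamma> * (C::'a)))
   = (if A = 0 \<and> B = 0 \<and> C = 0 then int CARD('a) ^ 3 else 0)"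
proof -
  have "(\<Sum>\<alpha>\<in>UNIV. \<Sum>\<beta>\<in>UNIV. \<Sum>\<gamma>\<in>UNIV. add_char n (\<alpha> * (A::'a)) * add_char n (\<beta> * (B::'a)) * add_char n (\<gamma> * (C::'a)))
     = (\<Sum>\<alpha>\<in>UNIV. add_char n (\<alpha> * A)) * (\<Sum>\<beta>\<in>UNIV. add_char n (\<beta> * B)) * (\<Sum>\<gamma>\<in>UNIV. add_char n (\<gamma> * C))"
    by (simp only: triple_prod mult.assoc)
  also have "\<dots> = (if A = 0 \<and> B = 0 \<and> C = 0 then int CARD('a) ^ 3 else 0)"
    unfolding orth by (simp add: power3_eq_cube)
  finally show ?thesis .
qed

lemma S_cube:
  "S_sum n k \<alpha> \<beta> \<gamma> ^ 3 = (\<Sum>q\<in>UNIV. add_char n (\<alpha> * Tf (2 ^ (2 * k) + 1) q) *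
      add_char n (\<beta> * Tf (2 ^ k + 1) q) * add_char n (\<gamma> * Tf 1 (q::'a\<times>'a\<times>'a)))"
proof -
  define f where "f x = \<alpha> * x ^ (2 ^ (2 * k) + 1) + \<beta> * x ^ (2 ^ k + 1) + \<gamma> * (x::'a)" for x
  have "S_sum n k \<alpha> \<beta> \<gamma> ^ 3 = (\<Sum>x\<in>UNIV. add_char n (f x)) * ((\<Sum>y\<in>UNIV. add_char n (f y)) * (\<Sum>z\<in>UNIV. add_char n (f z)))"
    unfolding S_sum_def f_def by (simp add: power3_eq_cube)
  also have "\<dots> = (\<Sum>x\<in>UNIV. \<Sum>y\<in>UNIV. \<Sum>z\<in>UNIV. add_char n (f x) * add_char n (f y) * add_char n (f z))"
    by (simp only: triple_prod mult.assoc)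
  also have "\<dots> = (\<Sum>q\<in>UNIV. add_char n (f (fst q)) * add_char n (f (fst (snd q))) * add_char n (f (snd (snd q))))"
    by (rule L3)
  also have "\<dots> = (\<Sum>q\<in>UNIV. add_char n (\<alpha> * Tf (2 ^ (2 * k) + 1) q) *
      add_char n (\<beta> * Tf (2 ^ k + 1) q) * add_char n (\<gamma> * Tf 1 (q::'a\<times>'a\<times>'a)))"
  proof (rule sum.cong[OF refl])
    fix q :: "'a\<times>'a\<times>'a"
    have "add_char n (f (fst q)) * add_char n (f (fst (snd q))) * add_char n (f (snd (snd q)))
       = add_char n (f (fst q) + f (fst (snd q)) + f (snd (snd q)))" by (simp add: char_mult)
    also have "f (fst q) + f (fst (snd q)) + f (snd (snd q))
      = \<alpha> * Tf (2 ^ (2 * k) + 1) q + \<beta> * Tf (2 ^ k + 1) q + \<gamma> * Tf 1 q"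
      unfolding f_def Tf_def by (simp add: algebra_simps)
    finally show "add_char n (f (fst q)) * add_char n (f (fst (snd q))) * add_char n (f (snd (snd q)))
      = add_char n (\<alpha> * Tf (2 ^ (2 * k) + 1) q) * add_char n (\<beta> * Tf (2 ^ k + 1) q) * add_char n (\<gamma> * Tf 1 q)"
      by (simp add: char_mult)
  qed
  finally show ?thesis .
qed

lemma scaled_iff: assumes "(x::'a) \<noteq> 0"
  shows "x ^ (2 ^ j) * (x * u) + x * (x * u) ^ (2 ^ j) = 0 \<longleftrightarrow> u ^ (2 ^ j) = u"
proof -
  have "x ^ (2 ^ j) * (x * u) + x * (x * u) ^ (2 ^ j) = (x ^ (2 ^ j) * x) * (u + u ^ (2 ^ j))"
    by (simp add: power_mult_distrib algebra_simps)
  moreover have "x ^ (2 ^ j) * x \<noteq> 0" using assms by simp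
  ultimately show ?thesis using add_eq0_iff[of u "u ^ (2 ^ j)"] by auto
qed

lemma count_xy:
  assumes "1 \<le> k"
  shows "(\<Sum>y\<in>UNIV. of_bool (x ^ (2 ^ k) * y + x * y ^ (2 ^ k) = 0 \<and>
                 x ^ (2 ^ (2 * k)) * y + x * y ^ (2 ^ (2 * k)) = (0::'a)) :: int)
       = (if x = 0 then int CARD('a) else 2 ^ gcd n k)"
proof (cases "x = 0")
  case True thus ?thesis by (simp add: zero_power)
next
  case False
  have "(\<Sum>y\<in>UNIV. of_bool (x ^ (2 ^ k) * y + x * y ^ (2 ^ k) = 0 \<and>
                 x ^ (2 ^ (2 * k)) * y + x * y ^ (2 ^ (2 * k)) = (0::'a)) :: int)
      = (\<Sum>u\<in>UNIV. of_bool (x ^ (2 ^ k) * (x * u) + x * (x * u) ^ (2 ^ k) = 0 \<and>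
                 x ^ (2 ^ (2 * k)) * (x * u) + x * (x * u) ^ (2 ^ (2 * k)) = (0::'a)))"
    by (rule sum.reindex_bij_witness[where i="\<lambda>y. x * y" and j="\<lambda>y. y / x"]) (use False in auto)
  also have "\<dots> = (\<Sum>u\<in>UNIV. of_bool (u ^ (2 ^ gcd n k) = (u::'a)))"
  proof (rule sum.cong[OF refl])
    fix u :: 'a
    have "u ^ (2 ^ k) = u \<Longrightarrow> u ^ (2 ^ (2 * k)) = u" using fix_mult[of u k 2] by (simp add: mult.commute)
    thus "of_bool (x ^ (2 ^ k) * (x * u) + x * (x * u) ^ (2 ^ k) = 0 \<and>
                 x ^ (2 ^ (2 * k)) * (x * u) + x * (x * u) ^ (2 ^ (2 * k)) = (0::'a)) = (of_bool (u ^ (2 ^ gcd n k) = u) :: int)"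
      unfolding scaled_iff[OF False] fix_k_iff[OF assms, symmetric] by auto
  qed
  also have "\<dots> = int (card {u::'a. u ^ (2 ^ gcd n k) = u})" by simp
  also have "\<dots> = 2 ^ gcd n k" using card_fix[of "gcd n k"] n1 by (simp add: Suc_le_eq)
  finally show ?thesis using False by simp
qed

lemma count_all:
  assumes "1 \<le> k"
  shows "(\<Sum>q\<in>(UNIV::('a\<times>'a\<times>'a) set). of_bool (Tf (2 ^ (2 * k) + 1) q = 0 \<and> Tf (2 ^ k + 1) q = 0 \<and> Tf 1 q = 0) :: int)
     = int CARD('a) * 2 ^ gcd n k + int CARD('a) - 2 ^ gcd n k"
proof -
  define P where "P x y = (x ^ (2 ^ k) * y + x * y ^ (2 ^ k) = 0 \<and>
                 x ^ (2 ^ (2 * k)) * y + x * y ^ (2 ^ (2 * k)) = (0::'a))" for x y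
  have "(\<Sum>q\<in>(UNIV::('a\<times>'a\<times>'a) set). of_bool (Tf (2 ^ (2 * k) + 1) q = 0 \<and> Tf (2 ^ k + 1) q = 0 \<and> Tf 1 q = 0) :: int)
    = (\<Sum>x\<in>(UNIV::'a set). \<Sum>y\<in>(UNIV::'a set). \<Sum>z\<in>(UNIV::'a set). of_bool (Tf (2 ^ (2 * k) + 1) (x, y, z) = 0 \<and> Tf (2 ^ k + 1) (x, y, z) = 0 \<and> Tf 1 (x, y, z) = 0))"
    using L3[of "\<lambda>x y z. (of_bool (Tf (2 ^ (2 * k) + 1) (x::'a, y, z) = 0 \<and> Tf (2 ^ k + 1) (x, y, z) = 0 \<and> Tf 1 (x, y, z) = 0) :: int)"]
    unfolding prod.collapse by (rule sym)
  also have "\<dots> = (\<Sum>x\<in>(UNIV::'a set). \<Sum>y\<in>(UNIV::'a set). \<Sum>z\<in>(UNIV::'a set). if x + y = z then of_bool (P x y) else 0)"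
  proof (intro sum.cong refl)
    fix x y z :: 'a
    have "Tf 1 (x, y, z) = 0 \<longleftrightarrow> x + y = z" unfolding Tf_def by (simp add: add_eq0_iff)
    moreover have "Tf (2 ^ j + 1) (x, y, x + y) = x ^ (2 ^ j) * y + x * y ^ (2 ^ j)" for j
      unfolding Tf_def fst_conv snd_conv by (rule cube_cond)
    ultimately show "(of_bool (Tf (2 ^ (2 * k) + 1) (x, y, z) = 0 \<and> Tf (2 ^ k + 1) (x, y, z) = 0 \<and> Tf 1 (x, y, z) = 0) :: int)
       = (if x + y = z then of_bool (P x y) else 0)"
      unfolding P_def by auto
  qed
  also have "\<dots> = (\<Sum>x\<in>(UNIV::'a set). \<Sum>y\<in>(UNIV::'a set). of_bool (P x y))" by simp
  also have "\<dots> = (\<Sum>x\<in>(UNIV::'a set). (if x = 0 then int CARD('a) else 2 ^ gcd n k))"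
    unfolding P_def using count_xy[OF assms] by simp
  also have "\<dots> = (\<Sum>x\<in>(UNIV::'a set). 2 ^ gcd n k + (if x = 0 then int CARD('a) - 2 ^ gcd n k else 0))"
    by (intro sum.cong) auto
  also have "\<dots> = int CARD('a) * 2 ^ gcd n k + int CARD('a) - 2 ^ gcd n k"
    by (simp add: sum.distrib)
  finally show ?thesis .
qed

lemma main:
  assumes "1 \<le> k"
  shows "(\<Sum>\<alpha>\<in>(UNIV::'a set). \<Sum>\<beta>\<in>(UNIV::'a set). \<Sum>\<gamma>\<in>(UNIV::'a set). (S_sum n k \<alpha> \<beta> \<gamma>) ^ 3)
      = int CARD('a) ^ 3 * (int CARD('a) * 2 ^ gcd n k + int CARD('a) - 2 ^ gcd n k)"
proof -
  define \<Phi> where "\<Phi> p q = add_char n (fst p * Tf (2 ^ (2 * k) + 1) q) *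
      add_char n (fst (snd p) * Tf (2 ^ k + 1) q) * add_char n (snd (snd p) * Tf 1 (q::'a\<times>'a\<times>'a))" for p :: "'a\<times>'a\<times>'a" and q
  have "(\<Sum>\<alpha>\<in>(UNIV::'a set). \<Sum>\<beta>\<in>(UNIV::'a set). \<Sum>\<gamma>\<in>(UNIV::'a set). (S_sum n k \<alpha> \<beta> \<gamma>) ^ 3)
     = (\<Sum>\<alpha>\<in>(UNIV::'a set). \<Sum>\<beta>\<in>(UNIV::'a set). \<Sum>\<gamma>\<in>(UNIV::'a set). \<Sum>q\<in>UNIV. \<Phi> (\<alpha>, \<beta>, \<gamma>) q)"
    unfolding S_cube \<Phi>_def by simp
  also have "\<dots> = (\<Sum>p\<in>UNIV. \<Sum>q\<in>UNIV. \<Phi> p q)"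
    using L3[of "\<lambda>\<alpha> \<beta> \<gamma>. \<Sum>q\<in>UNIV. \<Phi> (\<alpha>::'a, \<beta>::'a, \<gamma>::'a) q"] unfolding prod.collapse .
  also have "\<dots> = (\<Sum>q\<in>UNIV. \<Sum>p\<in>UNIV. \<Phi> p q)" by (rule sum.swap)
  also have "\<dots> = (\<Sum>q\<in>(UNIV::('a\<times>'a\<times>'a) set). of_bool (Tf (2 ^ (2 * k) + 1) q = 0 \<and> Tf (2 ^ k + 1) q = 0 \<and> Tf 1 q = 0) * int CARD('a) ^ 3)"
  proof (rule sum.cong[OF refl])
    fix q :: "'a\<times>'a\<times>'a"
    have "(\<Sum>p\<in>UNIV. \<Phi> p q) = (\<Sum>\<alpha>\<in>(UNIV::'a set). \<Sum>\<beta>\<in>(UNIV::'a set). \<Sum>\<gamma>\<in>(UNIV::'a set). \<Phi> (\<alpha>, \<beta>, \<gamma>) q)"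
      using L3[of "\<lambda>\<alpha> \<beta> \<gamma>. \<Phi> (\<alpha>::'a, \<beta>::'a, \<gamma>::'a) q"] unfolding prod.collapse by (rule sym)
    also have "\<dots> = (if Tf (2 ^ (2 * k) + 1) q = 0 \<and> Tf (2 ^ k + 1) q = 0 \<and> Tf 1 q = 0 then int CARD('a) ^ 3 else 0)"
      unfolding \<Phi>_def fst_conv snd_conv by (rule per_point)
    finally show "(\<Sum>p\<in>UNIV. \<Phi> p q) = of_bool (Tf (2 ^ (2 * k) + 1) q = 0 \<and> Tf (2 ^ k + 1) q = 0 \<and> Tf 1 q = 0) * int CARD('a) ^ 3"
      by simp
  qed
  also have "\<dots> = int CARD('a) ^ 3 * (\<Sum>q\<in>(UNIV::('a\<times>'a\<times>'a) set). of_bool (Tf (2 ^ (2 * k) + 1) q = 0 \<and> Tf (2 ^ k + 1) q = 0 \<and> Tf 1 q = 0))"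
    by (simp only: sum_distrib_left mult.commute)
  also have "\<dots> = int CARD('a) ^ 3 * (int CARD('a) * 2 ^ gcd n k + int CARD('a) - 2 ^ gcd n k)"
    by (simp only: count_all[OF assms])
  finally show ?thesis .
qed

end

theorem lemma4:
  fixes n k d :: nat
  assumes "n \<ge> 1"
    and "CARD('a) = 2 ^ n"
    and "1 \<le> k" and "k \<le> n - 1"
    and "d = gcd n k"
  shows "(\<Sum>\<alpha>\<in>(UNIV::'a::{field,finite} set). \<Sum>\<beta>\<in>(UNIV::'a set). \<Sum>\<gamma>\<in>(UNIV::'a set).
            (S_sum n k \<alpha> \<beta> \<gamma>) ^ 3)
         = (2 ^ (n + d) + 2 ^ n - 2 ^ d) * 2 ^ (3 * n)"
proof -
  have m: "(\<Sum>\<alpha>\<in>(UNIV::'a set). \<Sum>\<beta>\<in>(UNIV::'a set). \<Sum>\<gamma>\<in>(UNIV::'a set). (S_sum n k \<alpha> \<beta> \<gamma>) ^ 3)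
      = int CARD('a) ^ 3 * (int CARD('a) * 2 ^ gcd n k + int CARD('a) - 2 ^ gcd n k)"
    by (rule main[OF assms(2) assms(1) assms(3)])
  have c: "int CARD('a) = 2 ^ n" using assms(2) by simp
  have p3: "(2::int) ^ (3 * n) = (2 ^ n) ^ 3" by (metis power_mult mult.commute)
  show ?thesis unfolding m c p3 assms(5)[symmetric] by (simp add: power_add algebra_simps)
qed

end
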